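(* Let $r\ge2$, $d=r-1$, and let $s_1,\dots,s_r$ be independent indeterminates over $\mathbb{Q}$, $s_0=1$, $s_i=0$ for $i<0$ or $i>r$, $f(x)=x^r+s_1x^{r-1}+\cdots+s_r$. Define $d\times d$ matrices $X_1,X_2,X_3,X_4$ by: $(X_1)_{i,j}=(j-i)s_{r-(j-i)}$ if $j\ge i$ and $0$ otherwise; $(X_2)_{i,j}=s_{i-j}$; $(X_3)_{i,j}=s_{r-(j-i)}$ if $j\ge i$ and $0$ otherwise; $(X_4)_{i,j}=(r-(i-j))s_{i-j}$ if $i\ge j$ and $0$ otherwise. Let $u$ be the column vector with $i$-th entry $(r-i)s_i$ and $w$ the row vector with $j$-th entry $(r-j)s_{r-j}$ ($1\le i,j\le d$). Then \[ -X_1X_2+X_3X_4-\frac1r\,u\,w=J\,\mathrm{Bez}\Bigl(f'(x),\,f(x)-\tfrac1r xf'(x)\Bigr), \] where $J$ is the $d\times d$ matrix with ones on the antidiagonal and zeros elsewhere.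
   Context: For polynomials $F,G$ with $D=\max(\deg F,\deg G)$, the Bézout matrix $\mathrm{Bez}(F,G)$ is the $D\times D$ matrix defined by $\frac{F(x)G(y)-F(y)G(x)}{x-y}=(1,x,\ldots,x^{D-1})\,\mathrm{Bez}(F,G)\,(1,y,\ldots,y^{D-1})^T$. Here $f'(x)$ has degree $r-1$ and $f(x)-\frac1r xf'(x)$ has degree at most $r-1$, so the Bézout matrix is $(r-1)\times(r-1)$. *)

theory Defs
  imports "HOL-Computational_Algebra.Polynomial" "Jordan_Normal_Form.Matrix"
begin

text \<open>Bivariate polynomials are represented as 'a poly poly: the outer variable is y,
  the inner variable (inside the coefficients) is x.\<close>

definition bez_poly :: "'a::field poly \<Rightarrow> 'a poly \<Rightarrow> 'a poly poly" where
  "bez_poly F G =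
     ([:F:] * map_poly (\<lambda>c. [:c:]) G - [:G:] * map_poly (\<lambda>c. [:c:]) F)
       div [:[:0, 1:], -1:]"
  \<comment> \<open>(F(x)G(y) - F(y)G(x)) / (x - y)\<close>

text \<open>Bezout matrix, 0-indexed: entry (i,j) is the coefficient of x^i y^j.\<close>
definition bezout_matrix :: "'a::field poly \<Rightarrow> 'a poly \<Rightarrow> 'a mat" where
  "bezout_matrix F G =
     (let D = max (degree F) (degree G)
      in mat D D (\<lambda>(i, j). coeff (coeff (bez_poly F G) j) i))"

definition sx :: "nat \<Rightarrow> (nat \<Rightarrow> 'a::field) \<Rightarrow> int \<Rightarrow> 'a" where
  "sx r s k = (if k = 0 then 1 else if 1 \<le> k \<and> k \<le> int r then s (nat k) else 0)"

definition fpoly :: "nat \<Rightarrow> (nat \<Rightarrow> 'a::field) \<Rightarrow> 'a poly" where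
  "fpoly r s = (\<Sum>i\<le>r. monom (sx r s (int i)) (r - i))"

text \<open>Matrices of the paper (paper indices i,j in 1..d correspond to i+1, j+1 here).\<close>
definition X1 :: "nat \<Rightarrow> (nat \<Rightarrow> 'a::field) \<Rightarrow> 'a mat" where
  "X1 r s = mat (r - 1) (r - 1) (\<lambda>(i, j).
     if j \<ge> i then of_int (int j - int i) * sx r s (int r - (int j - int i)) else 0)"

definition X2 :: "nat \<Rightarrow> (nat \<Rightarrow> 'a::field) \<Rightarrow> 'a mat" where
  "X2 r s = mat (r - 1) (r - 1) (\<lambda>(i, j). sx r s (int i - int j))"

definition X3 :: "nat \<Rightarrow> (nat \<Rightarrow> 'a::field) \<Rightarrow> 'a mat" where
  "X3 r s = mat (r - 1) (r - 1) (\<lambda>(i, j).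
     if j \<ge> i then sx r s (int r - (int j - int i)) else 0)"

definition X4 :: "nat \<Rightarrow> (nat \<Rightarrow> 'a::field) \<Rightarrow> 'a mat" where
  "X4 r s = mat (r - 1) (r - 1) (\<lambda>(i, j).
     if i \<ge> j then of_int (int r - (int i - int j)) * sx r s (int i - int j) else 0)"

definition ucol :: "nat \<Rightarrow> (nat \<Rightarrow> 'a::field) \<Rightarrow> 'a mat" where
  "ucol r s = mat (r - 1) 1 (\<lambda>(i, _). of_int (int r - int (i+1)) * sx r s (int (i+1)))"

definition wrow :: "nat \<Rightarrow> (nat \<Rightarrow> 'a::field) \<Rightarrow> 'a mat" where
  "wrow r s = mat 1 (r - 1) (\<lambda>(_, j). of_int (int r - int (j+1)) * sx r s (int r - int (j+1)))"

definition antidiag :: "nat \<Rightarrow> 'a::field mat" where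
  "antidiag d = mat d d (\<lambda>(i, j). if i + j + 1 = d then 1 else 0)"

end

theory Submission imports Defs begin

definition gg :: "nat \<Rightarrow> (nat \<Rightarrow> 'a::field_char_0) \<Rightarrow> nat \<Rightarrow> nat \<Rightarrow> nat \<Rightarrow> 'a" where
 "gg r s i j k = (if i \<le> k then of_int (int r + int i + int j - 2 * int k) * sx r s (int r + int i - int k) * sx r s (int k - int j) else 0)"

definition UU :: "nat \<Rightarrow> (nat \<Rightarrow> 'a::field_char_0) \<Rightarrow> nat \<Rightarrow> nat \<Rightarrow> 'a" where
 "UU r s i j = (of_int (int r - int (i+1)) * sx r s (int (i+1))) * (of_int (int r - int (j+1)) * sx r s (int r - int (j+1))) / of_nat r"

definition Mf :: "nat \<Rightarrow> (nat \<Rightarrow> 'a::field_char_0) \<Rightarrow> nat \<Rightarrow> nat \<Rightarrow> 'a" where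
 "Mf r s i j = (\<Sum>k<r-1. gg r s i j k) - UU r s i j"

lemma sx_out: "k < 0 \<or> k > int r \<Longrightarrow> sx r s k = 0"
  by (auto simp: sx_def)

lemma sx_0[simp]: "sx r s 0 = 1" by (simp add: sx_def)

lemma lhs_entry:
  fixes s :: "nat \<Rightarrow> 'a::field_char_0"
  assumes "i < r - 1" "j < r - 1"
  shows "(- (X1 r s * X2 r s) + X3 r s * X4 r s - (1 / of_nat r) \<cdot>\<^sub>m (ucol r s * wrow r s)) $$ (i,j) = Mf r s i j"
proof -
  have "(- (X1 r s * X2 r s) + X3 r s * X4 r s - (1 / of_nat r) \<cdot>\<^sub>m (ucol r s * wrow r s)) $$ (i,j)
    = (\<Sum>k<r-1. - (X1 r s $$ (i,k) * X2 r s $$ (k,j)) + X3 r s $$ (i,k) * X4 r s $$ (k,j))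
      - (1 / of_nat r) * (ucol r s $$ (i,0) * wrow r s $$ (0,j))"
    using assms by (simp add: X1_def X2_def X3_def X4_def ucol_def wrow_def scalar_prod_def
        sum.distrib sum_negf sum_subtractf atLeast0LessThan)
  also have "\<dots> = Mf r s i j"
    unfolding Mf_def
  proof (rule arg_cong2[where f="(-)"])
    show "(\<Sum>k<r-1. - (X1 r s $$ (i,k) * X2 r s $$ (k,j)) + X3 r s $$ (i,k) * X4 r s $$ (k,j)) = (\<Sum>k<r-1. gg r s i j k)"
    proof (rule sum.cong[OF refl])
      fix k assume k: "k \<in> {..<r-1}"
      show "- (X1 r s $$ (i,k) * X2 r s $$ (k,j)) + X3 r s $$ (i,k) * X4 r s $$ (k,j) = gg r s i j k"
      proof (cases "j \<le> k")
        case True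
        then show ?thesis using assms k by (simp add: X1_def X2_def X3_def X4_def gg_def algebra_simps of_nat_diff)
      next
        case False
        then show ?thesis using assms k by (simp add: X1_def X2_def X3_def X4_def gg_def sx_out)
      qed
    qed
    show "(1 / of_nat r) * (ucol r s $$ (i,0) * wrow r s $$ (0,j)) = UU r s i j"
      using assms unfolding UU_def by (simp add: ucol_def wrow_def del: of_nat_Suc)
  qed
  finally show ?thesis .
qed


definition RR :: "nat \<Rightarrow> (nat \<Rightarrow> 'a::field_char_0) \<Rightarrow> nat \<Rightarrow> nat \<Rightarrow> 'a" where
 "RR r s i j = (of_int ((int r - int i)*(int r - int j)) * sx r s (int i) * sx r s (int r - int j)
     - of_int ((int i + 1)*(int j + 1)) * sx r s (int r - int j - 1) * sx r s (int i + 1)) / of_nat r"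

lemma antisym_sum:
  fixes f :: "nat \<Rightarrow> 'a::field_char_0"
  assumes "\<And>k. k \<le> n \<Longrightarrow> f (n - k) = - f k"
  shows "(\<Sum>k\<le>n. f k) = 0"
proof -
  have "(\<Sum>k\<le>n. f k) = (\<Sum>k\<in>{0..n}. f (n + 0 - k))"
    using sum.atLeastAtMost_rev[of f 0 n] by (simp add: atLeast0AtMost)
  also have "\<dots> = (\<Sum>k\<in>{0..n}. - f k)" by (rule sum.cong) (auto simp: assms)
  also have "\<dots> = - (\<Sum>k\<le>n. f k)" by (simp add: sum_negf atLeast0AtMost)
  finally have "2 * (\<Sum>k\<le>n. f k) = 0" by simp
  then show ?thesis by simp
qed

lemma Mf_d1: "r \<ge> 2 \<Longrightarrow> Mf r s (r-1) j = 0"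
  by (simp add: Mf_def gg_def UU_def of_nat_diff)

lemma Mf_d2: "r \<ge> 2 \<Longrightarrow> Mf r s i (r-1) = 0"
  unfolding Mf_def gg_def UU_def
  by (auto intro!: sum.neutral sx_out simp: of_nat_diff)

lemma alg1:
  fixes a b c e :: "'a::field_char_0"
  assumes "r \<noteq> 0" "X * int r + Y = W"
  shows "- (of_int X * a * b) - of_int Y * a * b / of_nat r + of_int Z * c * e / of_nat r
     = (of_int Z * c * e - of_int W * b * a) / of_nat r"
proof -
  have "(of_int W :: 'a) = of_int X * of_nat r + of_int Y"
    using arg_cong[OF assms(2), of "of_int :: int \<Rightarrow> 'a"] by simp
  then show ?thesis using assms(1) by (simp add: field_simps)
qed

lemma recur:
  fixes s :: "nat \<Rightarrow> 'a::field_char_0"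
  assumes r: "r \<ge> 2" and i: "1 \<le> i" "i \<le> r - 1" and j: "1 \<le> j"
  shows "Mf r s i j - Mf r s (i-1) (j-1) = RR r s i j"
proof -
  have shift: "gg r s (i-1) (j-1) k = gg r s i j (Suc k)" for k
  proof -
    have e: "int (i-1) = int i - 1" "int (j-1) = int j - 1" using i j by auto
    have a1: "int r + (int i - 1) + (int j - 1) - 2 * int k = int r + int i + int j - 2 * int (Suc k)"
      and a2: "int r + (int i - 1) - int k = int r + int i - int (Suc k)"
      and a3: "int k - (int j - 1) = int (Suc k) - int j"
      and a4: "(i - 1 \<le> k) = (i \<le> Suc k)" using i by auto
    show ?thesis unfolding gg_def e a1 a2 a3 a4 ..
  qed
  have s1: "(\<Sum>k<Suc (r-1). gg r s i j k) = gg r s i j 0 + (\<Sum>k<r-1. gg r s i j (Suc k))"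
    by (rule sum.lessThan_Suc_shift)
  have s2: "(\<Sum>k<Suc (r-1). gg r s i j k) = (\<Sum>k<r-1. gg r s i j k) + gg r s i j (r-1)"
    by simp
  have g0: "gg r s i j 0 = 0" using i by (simp add: gg_def)
  have gd: "gg r s i j (r-1) = of_int (int i + int j + 2 - int r) * sx r s (int i + 1) * sx r s (int r - int j - 1)"
    using i r by (simp add: gg_def of_nat_diff algebra_simps)
  have sumdiff: "(\<Sum>k<r-1. gg r s i j k) - (\<Sum>k<r-1. gg r s (i-1) (j-1) k) = - gg r s i j (r-1)"
  proof -
    have "(\<Sum>k<r-1. gg r s (i-1) (j-1) k) = (\<Sum>k<r-1. gg r s i j (Suc k))" by (simp only: shift)
    then show ?thesis using s1 s2 g0 by (simp add: algebra_simps)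
  qed
  have u1: "UU r s i j = of_int ((int r - int i - 1)*(int r - int j - 1)) * sx r s (int i + 1) * sx r s (int r - int j - 1) / of_nat r"
    by (simp add: UU_def algebra_simps)
  have u2: "UU r s (i-1) (j-1) = of_int ((int r - int i)*(int r - int j)) * sx r s (int i) * sx r s (int r - int j) / of_nat r"
    using i j by (simp add: UU_def of_nat_diff algebra_simps)
  have "Mf r s i j - Mf r s (i-1) (j-1) = - gg r s i j (r-1) - UU r s i j + UU r s (i-1) (j-1)"
    unfolding Mf_def using sumdiff by (simp add: algebra_simps)
  also have "\<dots> = RR r s i j"
    unfolding gd u1 u2 RR_def
    by (rule alg1) (use r in \<open>auto simp: algebra_simps\<close>)
  finally show ?thesis .
qed


lemma alg2:
  fixes a b c e :: "'a::field_char_0"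
  assumes "r \<noteq> 0" "X * int r + Y = W" "Q = - P * int r"
  shows "- (of_int X * a * b) - of_int P * c * e - of_int Y * a * b / of_nat r
     = (of_int Q * c * e - of_int W * b * a) / of_nat r"
proof -
  have "(of_int W :: 'a) = of_int X * of_nat r + of_int Y"
    using arg_cong[OF assms(2), of "of_int :: int \<Rightarrow> 'a"] by simp
  moreover have "(of_int Q :: 'a) = - of_int P * of_nat r"
    using arg_cong[OF assms(3), of "of_int :: int \<Rightarrow> 'a"] by simp
  ultimately show ?thesis using assms(1) by (simp add: field_simps)
qed

lemma sum_split_r:
  fixes h :: "nat \<Rightarrow> 'a::field_char_0"
  assumes r: "r \<ge> 2" and z: "\<And>k. k > r \<Longrightarrow> h k = 0"
  shows "(\<Sum>k\<le>r+n. h k) = (\<Sum>k<r-1. h k) + h (r-1) + h r"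
proof -
  have "(\<Sum>k\<le>r+n. h k) = (\<Sum>k<Suc r. h k)"
    by (rule sum.mono_neutral_right) (auto simp: z)
  also have "Suc r = Suc (Suc (r-1))" using r by simp
  also have "(\<Sum>k<Suc (Suc (r-1)). h k) = (\<Sum>k<r-1. h k) + h (r-1) + h (Suc (r-1))"
    by simp
  also have "Suc (r-1) = r" using r by simp
  finally show ?thesis .
qed

lemma bnd_j0:
  fixes s :: "nat \<Rightarrow> 'a::field_char_0"
  assumes r: "r \<ge> 2" and i: "i \<le> r - 1"
  shows "Mf r s i 0 = RR r s i 0"
proof -
  define h where "h k = gg r s i 0 k" for k
  have anti: "(\<Sum>k\<le>r+i. h k) = 0"
  proof (rule antisym_sum)
    fix k assume k: "k \<le> r + i"
    have e1: "int (r + i - k) = int r + int i - int k" using k by simp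
    have e2: "int r + int i - (int r + int i - int k) = int k" by simp
    have e3: "(i \<le> r + i - k) = (k \<le> r)" using k by auto
    show "h (r + i - k) = - h k"
    proof (cases "k \<le> r")
      case True
      show ?thesis
      proof (cases "i \<le> k")
        case True
        then show ?thesis using \<open>k \<le> r\<close> unfolding h_def gg_def e1 e2 e3
          by (simp add: algebra_simps)
      next
        case False
        then have "sx r s (int r + int i - int k) = 0" by (intro sx_out) auto
        then show ?thesis using \<open>k \<le> r\<close> False unfolding h_def gg_def e1 e2 e3
          by simp
      qed
    next
      case False
      then have "sx r s (int k) = 0" by (intro sx_out) auto
      then show ?thesis using False unfolding h_def gg_def e1 e2 e3 by simp
    qed
  qed
  have split: "(\<Sum>k\<le>r+i. h k) = (\<Sum>k<r-1. h k) + h (r-1) + h r"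
    by (rule sum_split_r[OF r]) (auto simp: h_def gg_def sx_out)
  have hd: "h (r-1) = of_int (int i + 2 - int r) * sx r s (int i + 1) * sx r s (int r - 1)"
    using i r by (simp add: h_def gg_def of_nat_diff algebra_simps)
  have hr: "h r = of_int (int i - int r) * sx r s (int i) * sx r s (int r)"
    using i r by (simp add: h_def gg_def)
  have u: "UU r s i 0 = of_int ((int r - int i - 1) * (int r - 1)) * sx r s (int i + 1) * sx r s (int r - 1) / of_nat r"
    by (simp add: UU_def algebra_simps)
  have rr: "RR r s i 0 = (of_int ((int r - int i) * int r) * sx r s (int i) * sx r s (int r)
     - of_int (int i + 1) * sx r s (int r - 1) * sx r s (int i + 1)) / of_nat r"
    by (simp add: RR_def)
  have S: "(\<Sum>k<r-1. h k) = - (h (r-1) + h r)"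
    unfolding eq_neg_iff_add_eq_0 using anti split by (simp add: ac_simps)
  have "Mf r s i 0 = - h (r-1) - h r - UU r s i 0"
    using S unfolding Mf_def h_def by simp
  also have "\<dots> = RR r s i 0"
    unfolding hd hr u rr
    by (rule alg2) (use r in \<open>auto simp: algebra_simps\<close>)
  finally show ?thesis .
qed

lemma bnd_i0:
  fixes s :: "nat \<Rightarrow> 'a::field_char_0"
  assumes r: "r \<ge> 2" and j: "j \<le> r - 1"
  shows "Mf r s 0 j = RR r s 0 j"
proof -
  define h where "h k = gg r s 0 j k" for k
  have anti: "(\<Sum>k\<le>r+j. h k) = 0"
  proof (rule antisym_sum)
    fix k assume k: "k \<le> r + j"
    have e1: "int (r + j - k) = int r + int j - int k" using k by simp
    have e2: "int r + int j - 2 * (int r + int j - int k) = - (int r + int j - 2 * int k)" by simp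
    have e3: "int r + 0 - (int r + int j - int k) = int k - int j" by simp
    have e4: "int r + int j - int k - int j = int r + 0 - int k" by simp
    show "h (r + j - k) = - h k"
      unfolding h_def gg_def e1 e2 e3 e4 by (simp add: algebra_simps)
  qed
  have split: "(\<Sum>k\<le>r+j. h k) = (\<Sum>k<r-1. h k) + h (r-1) + h r"
    by (rule sum_split_r[OF r]) (auto simp: h_def gg_def sx_out)
  have hd: "h (r-1) = of_int (int j + 2 - int r) * sx r s 1 * sx r s (int r - int j - 1)"
    using j r by (simp add: h_def gg_def of_nat_diff algebra_simps)
  have hr: "h r = of_int (int j - int r) * sx r s 0 * sx r s (int r - int j)"
    using j r by (simp add: h_def gg_def)
  have u: "UU r s 0 j = of_int ((int r - 1) * (int r - int j - 1)) * sx r s 1 * sx r s (int r - int j - 1) / of_nat r"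
    by (simp add: UU_def algebra_simps)
  have rr: "RR r s 0 j = (of_int (int r * (int r - int j)) * sx r s 0 * sx r s (int r - int j)
     - of_int (int j + 1) * sx r s (int r - int j - 1) * sx r s 1) / of_nat r"
    by (simp add: RR_def)
  have S: "(\<Sum>k<r-1. h k) = - (h (r-1) + h r)"
    unfolding eq_neg_iff_add_eq_0 using anti split by (simp add: ac_simps)
  have "Mf r s 0 j = - h (r-1) - h r - UU r s 0 j"
    using S unfolding Mf_def h_def by simp
  also have "\<dots> = RR r s 0 j"
    unfolding hd hr u rr
    by (rule alg2) (use r in \<open>auto simp: algebra_simps\<close>)
  finally show ?thesis .
qed


lemma coeff_fpoly: "coeff (fpoly r s) n = (if n \<le> r then sx r s (int r - int n) else 0)"
proof -
  have "coeff (fpoly r s) n = (\<Sum>i\<le>r. if r - i = n then sx r s (int i) else 0)"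
    by (simp add: fpoly_def coeff_sum coeff_monom)
  also have "\<dots> = (\<Sum>i\<le>r. if i = r - n \<and> n \<le> r then sx r s (int i) else 0)"
    by (rule sum.cong) auto
  also have "\<dots> = (if n \<le> r then sx r s (int r - int n) else 0)"
    by (cases "n \<le> r") (simp_all add: sum.delta of_nat_diff)
  finally show ?thesis .
qed

lemma coeff_F: "coeff (pderiv (fpoly r s)) n = (if n < r then of_nat (n+1) * sx r s (int r - int n - 1) else 0)"
  by (simp add: coeff_pderiv coeff_fpoly algebra_simps)

lemma coeff_G:
  fixes s :: "nat \<Rightarrow> 'a::field_char_0"
  assumes "r \<noteq> 0"
  shows "coeff (fpoly r s - Polynomial.smult (1 / of_nat r) ([:0, 1:] * pderiv (fpoly r s))) n
    = (if n \<le> r then (of_nat r - of_nat n) / of_nat r * sx r s (int r - int n) else 0)"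
proof (cases n)
  case 0
  then show ?thesis using assms by (auto simp: coeff_fpoly)
next
  case (Suc m)
  then show ?thesis using assms by (simp add: coeff_fpoly coeff_F field_simps)
qed

lemma degree_F:
  fixes s :: "nat \<Rightarrow> 'a::field_char_0"
  assumes "r \<ge> 2" shows "degree (pderiv (fpoly r s)) = r - 1"
proof (rule antisym)
  show "degree (pderiv (fpoly r s)) \<le> r - 1"
    by (rule degree_le) (auto simp: coeff_F)
  have "coeff (pderiv (fpoly r s)) (r - 1) \<noteq> 0"
    using assms by (simp add: coeff_F of_nat_diff)
  then show "r - 1 \<le> degree (pderiv (fpoly r s))" by (rule le_degree)
qed

lemma degree_G:
  fixes s :: "nat \<Rightarrow> 'a::field_char_0"
  assumes "r \<ge> 2" shows "degree (fpoly r s - Polynomial.smult (1 / of_nat r) ([:0, 1:] * pderiv (fpoly r s))) \<le> r - 1"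
proof (rule degree_le, intro allI impI)
  fix i assume "r - 1 < i"
  then show "coeff (fpoly r s - Polynomial.smult (1 / of_nat r) ([:0, 1:] * pderiv (fpoly r s))) i = 0"
    using assms by (subst coeff_G) auto
qed


abbreviation GG :: "nat \<Rightarrow> (nat \<Rightarrow> 'a::field_char_0) \<Rightarrow> 'a poly" where
  "GG r s \<equiv> fpoly r s - Polynomial.smult (1 / of_nat r) ([:0, 1:] * pderiv (fpoly r s))"

lemma link:
  fixes s :: "nat \<Rightarrow> 'a::field_char_0"
  assumes r: "r \<ge> 2" and a: "a \<le> r - 1" and b: "b \<le> r - 1"
  shows "coeff (pderiv (fpoly r s)) a * coeff (GG r s) b - coeff (GG r s) a * coeff (pderiv (fpoly r s)) b
    = RR r s (r - 1 - a) b"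
proof -
  have r0: "r \<noteq> 0" using r by simp
  have e1: "int (r - 1 - a) = int r - 1 - int a" using a r by simp
  have e2: "int r - 1 - int a + 1 = int r - int a" by simp
  have e3: "int r - int a - 1 = int r - 1 - int a" by simp
  have ga: "coeff (GG r s) a = (of_nat r - of_nat a)/of_nat r * sx r s (int r - int a)"
    by (subst coeff_G[OF r0]) (use a r in auto)
  have gb: "coeff (GG r s) b = (of_nat r - of_nat b)/of_nat r * sx r s (int r - int b)"
    by (subst coeff_G[OF r0]) (use b r in auto)
  have fa: "coeff (pderiv (fpoly r s)) a = of_nat (a+1) * sx r s (int r - 1 - int a)"
    using a r by (simp add: coeff_F e3)
  have fb: "coeff (pderiv (fpoly r s)) b = of_nat (b+1) * sx r s (int r - int b - 1)"
    using b r by (simp add: coeff_F)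
  show ?thesis
    unfolding RR_def e1 e2 ga gb fa fb using a b r r0
    by (simp add: field_simps of_nat_diff)
qed

definition Qp :: "nat \<Rightarrow> (nat \<Rightarrow> 'a::field_char_0) \<Rightarrow> 'a poly poly" where
  "Qp r s = (\<Sum>b<r-1. monom (\<Sum>a<r-1. monom (Mf r s (r - 2 - a) b) a) b)"

lemma coeff_Qp: "coeff (coeff (Qp r s) b) a = (if a < r - 1 \<and> b < r - 1 then Mf r s (r - 2 - a) b else 0)"
  by (simp add: Qp_def coeff_sum coeff_monom sum.delta)

lemma coeff_lhs_poly:
  fixes Q :: "'a::field poly poly"
  shows "coeff (coeff ([:[:0,1:], -1:] * Q) b) a
    = (if a = 0 then 0 else coeff (coeff Q b) (a-1)) - (if b = 0 then 0 else coeff (coeff Q (b-1)) a)"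
  by (cases a; cases b) simp_all

lemma coeff_rhs_poly:
  fixes F G :: "'a::field poly"
  shows "coeff (coeff ([:F:] * map_poly (\<lambda>c. [:c:]) G - [:G:] * map_poly (\<lambda>c. [:c:]) F) b) a
    = coeff F a * coeff G b - coeff G a * coeff F b"
  by (simp add: coeff_map_poly)


lemma main_coeff:
  fixes s :: "nat \<Rightarrow> 'a::field_char_0"
  assumes r: "r \<ge> 2"
  shows "coeff (coeff ([:[:0,1:], -1:] * Qp r s) b) a
    = coeff (coeff ([:pderiv (fpoly r s):] * map_poly (\<lambda>c. [:c:]) (GG r s)
        - [:GG r s:] * map_poly (\<lambda>c. [:c:]) (pderiv (fpoly r s))) b) a"
proof -
  have r0: "r \<noteq> 0" using r by simp
  have Gz: "coeff (GG r s) n = 0" if "n \<ge> r" for n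
    by (subst coeff_G[OF r0]) (use that in auto)
  have Fz: "coeff (pderiv (fpoly r s)) n = 0" if "n \<ge> r" for n
    using that by (simp add: coeff_F)
  show ?thesis
    unfolding coeff_lhs_poly coeff_rhs_poly coeff_Qp
  proof (cases "a \<ge> r \<or> b \<ge> r")
    case True
    then show "(if a = 0 then 0 else (if a - 1 < r - 1 \<and> b < r - 1 then Mf r s (r - 2 - (a - 1)) b else 0)) -
      (if b = 0 then 0 else (if a < r - 1 \<and> b - 1 < r - 1 then Mf r s (r - 2 - a) (b - 1) else 0)) =
      coeff (pderiv (fpoly r s)) a * coeff (GG r s) b - coeff (GG r s) a * coeff (pderiv (fpoly r s)) b"
      using r Gz Fz by auto
  next
    case False
    then have a: "a \<le> r - 1" and b: "b \<le> r - 1" by auto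
    define i where "i = r - 1 - a"
    have i: "i \<le> r - 1" by (simp add: i_def)
    have L1: "(if a = 0 then 0 else (if a - 1 < r - 1 \<and> b < r - 1 then Mf r s (r - 2 - (a - 1)) b else 0))
       = Mf r s i b"
    proof (cases "a = 0")
      case True
      then show ?thesis using Mf_d1[OF r] by (simp add: i_def)
    next
      case False
      show ?thesis
      proof (cases "b < r - 1")
        case True
        have "r - 2 - (a - 1) = i" using False a r by (simp add: i_def)
        then show ?thesis using False True a r by simp
      next
        case False2: False
        then have "b = r - 1" using b by simp
        then show ?thesis using False False2 Mf_d2[OF r] by simp
      qed
    qed
    have L2: "(if b = 0 then 0 else (if a < r - 1 \<and> b - 1 < r - 1 then Mf r s (r - 2 - a) (b - 1) else 0))
       = (if 1 \<le> i \<and> 1 \<le> b then Mf r s (i - 1) (b - 1) else 0)"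
    proof -
      have "r - 2 - a = i - 1" by (simp add: i_def)
      moreover have "(a < r - 1) = (1 \<le> i)" using a by (auto simp: i_def)
      ultimately show ?thesis using b r by auto
    qed
    have R: "coeff (pderiv (fpoly r s)) a * coeff (GG r s) b - coeff (GG r s) a * coeff (pderiv (fpoly r s)) b
       = RR r s i b"
      unfolding i_def by (rule link[OF r a b])
    have M: "Mf r s i b - (if 1 \<le> i \<and> 1 \<le> b then Mf r s (i - 1) (b - 1) else 0) = RR r s i b"
    proof (cases "1 \<le> i \<and> 1 \<le> b")
      case True
      then show ?thesis using recur[OF r _ i, of b s] by simp
    next
      case False
      then have "i = 0 \<or> b = 0" by auto
      then show ?thesis
      proof
        assume "i = 0" then show ?thesis using bnd_i0[OF r b, of s] by simp
      next
        assume "b = 0" then show ?thesis using bnd_j0[OF r i, of s] by simp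
      qed
    qed
    show "(if a = 0 then 0 else (if a - 1 < r - 1 \<and> b < r - 1 then Mf r s (r - 2 - (a - 1)) b else 0)) -
      (if b = 0 then 0 else (if a < r - 1 \<and> b - 1 < r - 1 then Mf r s (r - 2 - a) (b - 1) else 0)) =
      coeff (pderiv (fpoly r s)) a * coeff (GG r s) b - coeff (GG r s) a * coeff (pderiv (fpoly r s)) b"
      unfolding L1 L2 R M ..
  qed
qed


lemma bez_eq:
  fixes s :: "nat \<Rightarrow> 'a::field_char_0"
  assumes r: "r \<ge> 2"
  shows "bez_poly (pderiv (fpoly r s)) (GG r s) = Qp r s"
proof -
  have e: "[:pderiv (fpoly r s):] * map_poly (\<lambda>c. [:c:]) (GG r s)
        - [:GG r s:] * map_poly (\<lambda>c. [:c:]) (pderiv (fpoly r s)) = [:[:0,1:], -1:] * Qp r s"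
    by (intro poly_eqI) (simp only: main_coeff[OF r])
  have nz: "[:[:0,1:], -1:] \<noteq> (0 :: 'a poly poly)" by simp
  show ?thesis unfolding bez_poly_def e by (rule nonzero_mult_div_cancel_left[OF nz])
qed

theorem proposition6:
  fixes r :: nat and s :: "nat \<Rightarrow> 'a::field_char_0"
  assumes "r \<ge> 2"
  shows "- (X1 r s * X2 r s) + X3 r s * X4 r s - (1 / of_nat r) \<cdot>\<^sub>m (ucol r s * wrow r s)
         = antidiag (r - 1) *
           bezout_matrix (pderiv (fpoly r s))
             (fpoly r s - Polynomial.smult (1 / of_nat r) ([:0, 1:] * pderiv (fpoly r s)))"
proof -
  have D: "max (degree (pderiv (fpoly r s))) (degree (GG r s)) = r - 1"
    using degree_F[OF assms, of s] degree_G[OF assms, of s] by simp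
  have B: "bezout_matrix (pderiv (fpoly r s)) (GG r s) = mat (r-1) (r-1) (\<lambda>(i, j). coeff (coeff (Qp r s) j) i)"
    unfolding bezout_matrix_def D bez_eq[OF assms] Let_def ..
  show ?thesis
    unfolding B
  proof (rule eq_matI)
    fix i j assume i: "i < dim_row (antidiag (r - 1) * mat (r-1) (r-1) (\<lambda>(i, j). coeff (coeff (Qp r s) j) i))"
      and j: "j < dim_col (antidiag (r - 1) * mat (r-1) (r-1) (\<lambda>(i, j). coeff (coeff (Qp r s) j) i))"
    then have i: "i < r - 1" and j: "j < r - 1" by (simp_all add: antidiag_def)
    have "(antidiag (r - 1) * mat (r-1) (r-1) (\<lambda>(i, j). coeff (coeff (Qp r s) j) i)) $$ (i, j)
       = (\<Sum>k\<in>{0..<r-1}. (if i + k + 1 = r - 1 then 1 else 0) * coeff (coeff (Qp r s) j) k)"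
      using i j by (simp add: antidiag_def scalar_prod_def)
    also have "\<dots> = (\<Sum>k\<in>{0..<r-1}. if k = r - 2 - i then coeff (coeff (Qp r s) j) k else 0)"
      by (rule sum.cong) (use i in auto)
    also have "\<dots> = coeff (coeff (Qp r s) j) (r - 2 - i)"
      using i by (simp add: sum.delta)
    also have "\<dots> = Mf r s i j"
    proof -
      have "r - 2 - i < r - 1" "r - 2 - (r - 2 - i) = i" using i by arith+
      then show ?thesis using j by (simp add: coeff_Qp)
    qed
    also have "\<dots> = (- (X1 r s * X2 r s) + X3 r s * X4 r s - (1 / of_nat r) \<cdot>\<^sub>m (ucol r s * wrow r s)) $$ (i,j)"
      by (rule lhs_entry[OF i j, symmetric])
    finally show "(- (X1 r s * X2 r s) + X3 r s * X4 r s - (1 / of_nat r) \<cdot>\<^sub>m (ucol r s * wrow r s)) $$ (i,j)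
       = (antidiag (r - 1) * mat (r-1) (r-1) (\<lambda>(i, j). coeff (coeff (Qp r s) j) i)) $$ (i, j)" by simp
  qed (simp_all add: antidiag_def ucol_def wrow_def)
qed

end
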